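(* Let $M=(Q_M,\Sigma,\delta_M,s_M,F_M)$ be a complete DFA with $m\ge 2$ states and $N=(Q_N,\Sigma,\delta_N,s_N,F_N)$ a complete DFA with $n\ge 1$ states over the same alphabet, and suppose $k:=|F_M\setminus\{s_M\}|\ge 1$. Then there exists a complete DFA with at most $(2^{m-1}+2^{m-k-1})\cdot n-n+1$ states that accepts $L(M)^*\cup L(N)$.
   Context: A DFA is a 5-tuple $(Q,\Sigma,\delta,s,F)$ with finite state set $Q$, finite alphabet $\Sigma$, transition function $\delta:Q\times\Sigma\to Q$ (total, i.e. the DFA is complete), initial state $s$ and final states $F\subseteq Q$; $L(M)$ is the language it accepts. For a language $L$, $L^*$ denotes its Kleene star. *)

theory Defs
  imports Main
begin

record ('q, 'a) dfa =
  states :: "'q set"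
  delta  :: "'q \<Rightarrow> 'a \<Rightarrow> 'q"
  start  :: 'q
  finals :: "'q set"

definition complete_dfa :: "'a set \<Rightarrow> ('q, 'a) dfa \<Rightarrow> bool" where
  "complete_dfa Alph M \<longleftrightarrow>
     finite Alph \<and> finite (states M) \<and> start M \<in> states M \<and> finals M \<subseteq> states M \<and>
     (\<forall>q \<in> states M. \<forall>a \<in> Alph. delta M q a \<in> states M)"

definition delta_hat :: "('q, 'a) dfa \<Rightarrow> 'q \<Rightarrow> 'a list \<Rightarrow> 'q" where
  "delta_hat M q w = foldl (delta M) q w"

definition lang :: "'a set \<Rightarrow> ('q, 'a) dfa \<Rightarrow> 'a list set" where
  "lang Alph M = {w. set w \<subseteq> Alph \<and> delta_hat M (start M) w \<in> finals M}"

definition kstar :: "'a list set \<Rightarrow> 'a list set" where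
  "kstar L = {concat ws | ws. set ws \<subseteq> L}"

end

theory Submission
  imports Defs
begin


lemma dh_nil[simp]: "delta_hat M q [] = q" by (simp add: delta_hat_def)
lemma dh_snoc[simp]: "delta_hat M q (v @ [a]) = delta M (delta_hat M q v) a"
  by (simp add: delta_hat_def)
lemma dh_cons[simp]: "delta_hat M q (a # v) = delta_hat M (delta M q a) v"
  by (simp add: delta_hat_def)

lemma kstar_nil: "[] \<in> kstar L"
  unfolding kstar_def by (rule CollectI, rule exI[of _ "[]"]) simp

lemma kstar_app: "u \<in> kstar L \<Longrightarrow> v \<in> L \<Longrightarrow> u @ v \<in> kstar L"
proof -
  assume "u \<in> kstar L" "v \<in> L"
  then obtain ws where "set ws \<subseteq> L" "u = concat ws" unfolding kstar_def by blast
  then have "set (ws @ [v]) \<subseteq> L" "u @ v = concat (ws @ [v])" using \<open>v \<in> L\<close> by auto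
  then show ?thesis unfolding kstar_def by blast
qed

lemma kstar_alph: "w \<in> kstar (lang Alph M) \<Longrightarrow> set w \<subseteq> Alph"
proof -
  assume "w \<in> kstar (lang Alph M)"
  then obtain ws where ws: "set ws \<subseteq> lang Alph M" "w = concat ws" unfolding kstar_def by blast
  have "\<forall>x \<in> set ws. set x \<subseteq> Alph" using ws(1) unfolding lang_def by blast
  then show ?thesis using ws(2) by auto
qed

lemma kstar_decomp_aux:
  "concat ws \<noteq> [] \<Longrightarrow> set ws \<subseteq> L \<Longrightarrow>
   \<exists>u v. concat ws = u @ v \<and> u \<in> kstar L \<and> v \<in> L \<and> v \<noteq> []"
proof (induction ws rule: rev_induct)
  case Nil then show ?case by simp
next
  case (snoc z ws)
  show ?case
  proof (cases "z = []")
    case True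
    then have "concat ws \<noteq> []" "set ws \<subseteq> L" using snoc.prems by auto
    then obtain u v where "concat ws = u @ v \<and> u \<in> kstar L \<and> v \<in> L \<and> v \<noteq> []"
      using snoc.IH by blast
    then show ?thesis using True by auto
  next
    case False
    have "set ws \<subseteq> L" "z \<in> L" using snoc.prems by auto
    then have "concat ws \<in> kstar L" unfolding kstar_def by blast
    then have "concat (ws @ [z]) = concat ws @ z \<and> concat ws \<in> kstar L \<and> z \<in> L \<and> z \<noteq> []"
      using False \<open>z \<in> L\<close> by simp
    then show ?thesis by blast
  qed
qed

lemma kstar_decomp:
  "x \<in> kstar L \<Longrightarrow> x \<noteq> [] \<Longrightarrow> \<exists>u v. x = u @ v \<and> u \<in> kstar L \<and> v \<in> L \<and> v \<noteq> []"
proof -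
  assume "x \<in> kstar L" "x \<noteq> []"
  then obtain ws where "set ws \<subseteq> L" "x = concat ws" unfolding kstar_def by blast
  then show ?thesis using kstar_decomp_aux \<open>x \<noteq> []\<close> by blast
qed


definition stp :: "('q,'a) dfa \<Rightarrow> 'q set \<Rightarrow> 'a \<Rightarrow> 'q set" where
  "stp M P a = (if (\<lambda>q. delta M q a) ` P \<inter> finals M \<noteq> {}
     then insert (start M) ((\<lambda>q. delta M q a) ` P) else (\<lambda>q. delta M q a) ` P)"

definition Xs :: "'a set \<Rightarrow> ('q,'a) dfa \<Rightarrow> 'a list \<Rightarrow> 'q set" where
  "Xs Alph M w = {delta_hat M (start M) v | u v. w = u @ v \<and> u \<in> kstar (lang Alph M)}"

lemma Xs_nil: "Xs Alph M [] = {start M}"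
  unfolding Xs_def using kstar_nil by fastforce

lemma Xs_mem: "x \<in> Xs Alph M w \<longleftrightarrow>
   (\<exists>u v. w = u @ v \<and> u \<in> kstar (lang Alph M) \<and> x = delta_hat M (start M) v)"
  unfolding Xs_def by blast

lemma img_mem:
  "x \<in> (\<lambda>q. delta M q a) ` Xs Alph M w \<longleftrightarrow>
   (\<exists>u v. w @ [a] = u @ v \<and> u \<in> kstar (lang Alph M) \<and> v \<noteq> [] \<and> x = delta_hat M (start M) v)"
proof
  assume "x \<in> (\<lambda>q. delta M q a) ` Xs Alph M w"
  then obtain y where y: "y \<in> Xs Alph M w" "x = delta M y a" by blast
  then obtain u v where h: "w = u @ v" "u \<in> kstar (lang Alph M)" "y = delta_hat M (start M) v"
    unfolding Xs_mem by blast
  then have "w @ [a] = u @ (v @ [a]) \<and> u \<in> kstar (lang Alph M) \<and> v @ [a] \<noteq> []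
     \<and> x = delta_hat M (start M) (v @ [a])" using y by simp
  then show "\<exists>u v. w @ [a] = u @ v \<and> u \<in> kstar (lang Alph M) \<and> v \<noteq> [] \<and> x = delta_hat M (start M) v"
    by blast
next
  assume "\<exists>u v. w @ [a] = u @ v \<and> u \<in> kstar (lang Alph M) \<and> v \<noteq> [] \<and> x = delta_hat M (start M) v"
  then obtain u v where h: "w @ [a] = u @ v" "u \<in> kstar (lang Alph M)" "v \<noteq> []"
     "x = delta_hat M (start M) v" by blast
  obtain v0 b where v: "v = v0 @ [b]" using h(3) by (cases v rule: rev_exhaust) auto
  have "w @ [a] = (u @ v0) @ [b]" using h(1) v by simp
  then have "w = u @ v0" "b = a" by auto
  then have "delta_hat M (start M) v0 \<in> Xs Alph M w" unfolding Xs_mem using h(2) by blast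
  moreover have "x = delta M (delta_hat M (start M) v0) a" using h(4) v \<open>b = a\<close> by simp
  ultimately show "x \<in> (\<lambda>q. delta M q a) ` Xs Alph M w" by blast
qed

lemma Xs_snoc:
  assumes "set (w @ [a]) \<subseteq> Alph"
  shows "Xs Alph M (w @ [a]) = stp M (Xs Alph M w) a"
proof -
  let ?K = "kstar (lang Alph M)"
  let ?I = "(\<lambda>q. delta M q a) ` Xs Alph M w"
  have memK: "w @ [a] \<in> ?K \<longleftrightarrow> ?I \<inter> finals M \<noteq> {}"
  proof
    assume "w @ [a] \<in> ?K"
    then obtain u v where h: "w @ [a] = u @ v" "u \<in> ?K" "v \<in> lang Alph M" "v \<noteq> []"
      using kstar_decomp by blast
    then have "delta_hat M (start M) v \<in> ?I" unfolding img_mem by blast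
    moreover have "delta_hat M (start M) v \<in> finals M" using h(3) unfolding lang_def by auto
    ultimately show "?I \<inter> finals M \<noteq> {}" by blast
  next
    assume "?I \<inter> finals M \<noteq> {}"
    then obtain x where x: "x \<in> ?I" "x \<in> finals M" by blast
    then obtain u v' where h: "w @ [a] = u @ v'" "u \<in> ?K" "x = delta_hat M (start M) v'"
      unfolding img_mem by blast
    have "set v' \<subseteq> Alph" using assms h(1) by (metis le_sup_iff set_append)
    then have "v' \<in> lang Alph M" using h(3) x(2) unfolding lang_def by auto
    then show "w @ [a] \<in> ?K" using h(1,2) kstar_app by metis
  qed
  have full: "Xs Alph M (w @ [a]) = ?I \<union> (if w @ [a] \<in> ?K then {start M} else {})"
  proof (rule set_eqI, rule iffI)
    fix x assume "x \<in> Xs Alph M (w @ [a])"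
    then obtain u v' where h: "w @ [a] = u @ v'" "u \<in> ?K" "x = delta_hat M (start M) v'"
      unfolding Xs_mem by blast
    show "x \<in> ?I \<union> (if w @ [a] \<in> ?K then {start M} else {})"
    proof (cases "v' = []")
      case True then show ?thesis using h by simp
    next
      case False
      then have "x \<in> ?I" unfolding img_mem using h by blast
      then show ?thesis by blast
    qed
  next
    fix x assume x: "x \<in> ?I \<union> (if w @ [a] \<in> ?K then {start M} else {})"
    show "x \<in> Xs Alph M (w @ [a])"
    proof (cases "x \<in> ?I")
      case True
      then obtain u v where "w @ [a] = u @ v" "u \<in> ?K" "x = delta_hat M (start M) v"
        unfolding img_mem by blast
      then show ?thesis unfolding Xs_mem by blast
    next
      case False
      then have "w @ [a] \<in> ?K" "x = start M" using x by (auto split: if_splits)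
      then have "w @ [a] = (w @ [a]) @ [] \<and> w @ [a] \<in> ?K \<and> x = delta_hat M (start M) []" by simp
      then show ?thesis unfolding Xs_mem by blast
    qed
  qed
  show ?thesis unfolding full stp_def using memK by auto
qed

lemma Xs_fold:
  "set w \<subseteq> Alph \<Longrightarrow> foldl (stp M) {start M} w = Xs Alph M w"
proof (induction w rule: rev_induct)
  case Nil then show ?case by (simp add: Xs_nil)
next
  case (snoc a w)
  have "set w \<subseteq> Alph" using snoc.prems by simp
  then have "foldl (stp M) {start M} w = Xs Alph M w" using snoc.IH by simp
  then show ?case using Xs_snoc[OF snoc.prems, of M] by simp
qed

lemma Xs_accept:
  assumes "set w \<subseteq> Alph"
  shows "(w = [] \<or> Xs Alph M w \<inter> finals M \<noteq> {}) \<longleftrightarrow> w \<in> kstar (lang Alph M)"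
proof
  assume "w = [] \<or> Xs Alph M w \<inter> finals M \<noteq> {}"
  then show "w \<in> kstar (lang Alph M)"
  proof
    assume "w = []" then show ?thesis using kstar_nil by simp
  next
    assume "Xs Alph M w \<inter> finals M \<noteq> {}"
    then obtain u v where h: "w = u @ v" "u \<in> kstar (lang Alph M)" "delta_hat M (start M) v \<in> finals M"
      unfolding Xs_def by blast
    then have "v \<in> lang Alph M" using assms unfolding lang_def by auto
    then show ?thesis using h kstar_app by metis
  qed
next
  assume "w \<in> kstar (lang Alph M)"
  show "w = [] \<or> Xs Alph M w \<inter> finals M \<noteq> {}"
  proof (cases "w = []")
    case False
    then obtain u v where h: "w = u @ v" "u \<in> kstar (lang Alph M)" "v \<in> lang Alph M"
      using kstar_decomp \<open>w \<in> kstar _\<close> by blast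
    then have "delta_hat M (start M) v \<in> Xs Alph M w \<inter> finals M"
      unfolding Xs_def lang_def by auto
    then show ?thesis by blast
  qed simp
qed

lemma dh_closed:
  "complete_dfa Alph D \<Longrightarrow> q \<in> states D \<Longrightarrow> set w \<subseteq> Alph \<Longrightarrow> delta_hat D q w \<in> states D"
  by (induction w arbitrary: q) (auto simp: complete_dfa_def)

lemma to_nat:
  fixes D :: "('r,'a) dfa"
  assumes "complete_dfa Alph D"
  shows "\<exists>D' :: (nat,'a) dfa. complete_dfa Alph D' \<and> card (states D') = card (states D)
            \<and> lang Alph D' = lang Alph D"
proof -
  have fin: "finite (states D)" using assms unfolding complete_dfa_def by auto
  obtain f :: "'r \<Rightarrow> nat" where inj: "inj_on f (states D)"
    using finite_imp_inj_to_nat_seg[OF fin] by blast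
  define g where "g = inv_into (states D) f"
  have gf: "\<And>q. q \<in> states D \<Longrightarrow> g (f q) = q" unfolding g_def using inj by simp
  define D' :: "(nat,'a) dfa" where "D' = \<lparr>states = f ` states D, delta = (\<lambda>x a. f (delta D (g x) a)),
     start = f (start D), finals = f ` finals D\<rparr>"
  have c: "complete_dfa Alph D'" using assms gf unfolding complete_dfa_def D'_def by auto
  have dh: "\<And>q. q \<in> states D \<Longrightarrow> set w \<subseteq> Alph \<Longrightarrow> delta_hat D' (f q) w = f (delta_hat D q w)" for q w
  proof (induction w arbitrary: q)
    case Nil then show ?case by simp
  next
    case (Cons a w)
    have "delta D q a \<in> states D" using assms Cons.prems unfolding complete_dfa_def by auto
    then show ?case using Cons gf by (simp add: D'_def)
  qed
  have fs: "finals D \<subseteq> states D" using assms unfolding complete_dfa_def by auto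
  have st: "start D \<in> states D" using assms unfolding complete_dfa_def by auto
  have "lang Alph D' = lang Alph D"
  proof (rule set_eqI)
    fix w
    show "w \<in> lang Alph D' \<longleftrightarrow> w \<in> lang Alph D"
    proof (cases "set w \<subseteq> Alph")
      case True
      have m: "delta_hat D (start D) w \<in> states D" using dh_closed[OF assms st True] .
      have "f (delta_hat D (start D) w) \<in> f ` finals D \<longleftrightarrow> delta_hat D (start D) w \<in> finals D"
        using inj m fs by (auto dest: inj_onD)
      then show ?thesis using True dh[OF st True] unfolding lang_def by (simp add: D'_def)
    qed (auto simp: lang_def)
  qed
  moreover have "card (states D') = card (states D)"
    using card_image[OF inj] by (simp add: D'_def)
  ultimately show ?thesis using c by blast
qed



definition Tset :: "('q,'a) dfa \<Rightarrow> 'q set set" where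
  "Tset M = {P. P \<subseteq> states M \<and> P \<noteq> {} \<and> (P \<inter> finals M \<noteq> {} \<longrightarrow> start M \<in> P)}"

definition selP :: "('q,'a) dfa \<Rightarrow> 'q set option \<Rightarrow> 'q set" where
  "selP M x = (case x of None \<Rightarrow> {start M} | Some P \<Rightarrow> P)"

definition SU :: "('q,'a) dfa \<Rightarrow> ('p,'a) dfa \<Rightarrow> ('q set option \<times> 'p, 'a) dfa" where
  "SU M N = \<lparr>states = insert (None, start N) (Some ` Tset M \<times> states N),
     delta = (\<lambda>xp a. (Some (stp M (selP M (fst xp)) a), delta N (snd xp) a)),
     start = (None, start N),
     finals = {xp \<in> insert (None, start N) (Some ` Tset M \<times> states N).
        fst xp = None \<or> (\<exists>P. fst xp = Some P \<and> P \<inter> finals M \<noteq> {}) \<or> snd xp \<in> finals N}\<rparr>"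

lemma stp_T:
  assumes "complete_dfa Alph M" "P \<in> Tset M" "a \<in> Alph"
  shows "stp M P a \<in> Tset M"
proof -
  have img: "(\<lambda>q. delta M q a) ` P \<subseteq> states M" using assms unfolding complete_dfa_def Tset_def by auto
  have ne: "(\<lambda>q. delta M q a) ` P \<noteq> {}" using assms(2) unfolding Tset_def by auto
  have s: "start M \<in> states M" using assms(1) unfolding complete_dfa_def by auto
  show ?thesis using img ne s unfolding Tset_def stp_def by auto
qed

lemma single_T: "complete_dfa Alph M \<Longrightarrow> {start M} \<in> Tset M"
  unfolding Tset_def complete_dfa_def by auto

lemma selP_T: "complete_dfa Alph M \<Longrightarrow> (x, p) \<in> states (SU M N) \<Longrightarrow> selP M x \<in> Tset M"
  using single_T[of Alph M] unfolding SU_def selP_def by (cases x) auto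

lemma SU_complete:
  assumes "complete_dfa Alph M" "complete_dfa Alph N"
  shows "complete_dfa Alph (SU M N)"
proof -
  have finT: "finite (Tset M)"
  proof (rule finite_subset)
    show "Tset M \<subseteq> Pow (states M)" unfolding Tset_def by auto
    show "finite (Pow (states M))" using assms(1) unfolding complete_dfa_def by auto
  qed
  have fin: "finite (states (SU M N))" using finT assms(2) unfolding SU_def complete_dfa_def by auto
  have tr: "\<forall>q \<in> states (SU M N). \<forall>a \<in> Alph. delta (SU M N) q a \<in> states (SU M N)"
  proof (intro ballI)
    fix q a assume q: "q \<in> states (SU M N)" and a: "a \<in> Alph"
    obtain x p where qe: "q = (x, p)" by (cases q)
    have "(x, p) \<in> states (SU M N)" using q qe by simp
    then have "selP M x \<in> Tset M" by (rule selP_T[OF assms(1)])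
    then have "stp M (selP M x) a \<in> Tset M" using stp_T[OF assms(1) _ a] by blast
    moreover have "p \<in> states N" using q qe assms(2) unfolding SU_def complete_dfa_def by auto
    then have "delta N p a \<in> states N" using a assms(2) unfolding complete_dfa_def by auto
    ultimately show "delta (SU M N) q a \<in> states (SU M N)" using qe unfolding SU_def by auto
  qed
  show ?thesis using fin tr assms unfolding complete_dfa_def SU_def by auto
qed

lemma SU_delta: "delta (SU M N) xp a = (Some (stp M (selP M (fst xp)) a), delta N (snd xp) a)"
  by (simp add: SU_def)

lemma SU_dh_some:
  "delta_hat (SU M N) (Some P, p) w = (Some (foldl (stp M) P w), delta_hat N p w)"
  by (induction w arbitrary: P p) (auto simp: SU_delta selP_def)

lemma SU_dh_start:
  "delta_hat (SU M N) (None, p) w =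
     (if w = [] then None else Some (foldl (stp M) {start M} w), delta_hat N p w)"
  by (cases w) (auto simp: SU_delta selP_def SU_dh_some)

lemma SU_lang:
  assumes "complete_dfa Alph M" "complete_dfa Alph N"
  shows "lang Alph (SU M N) = kstar (lang Alph M) \<union> lang Alph N"
proof (rule set_eqI)
  fix w
  show "w \<in> lang Alph (SU M N) \<longleftrightarrow> w \<in> kstar (lang Alph M) \<union> lang Alph N"
  proof (cases "set w \<subseteq> Alph")
    case True
    have c: "complete_dfa Alph (SU M N)" using SU_complete[OF assms] .
    have st: "start (SU M N) \<in> states (SU M N)" using c unfolding complete_dfa_def by auto
    have inS: "delta_hat (SU M N) (start (SU M N)) w \<in> states (SU M N)"
      using dh_closed[OF c st True] .
    have dh: "delta_hat (SU M N) (start (SU M N)) w =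
      (if w = [] then None else Some (Xs Alph M w), delta_hat N (start N) w)"
      using SU_dh_start[of M N "start N" w] Xs_fold[OF True, of M] by (simp add: SU_def)
    have "delta_hat (SU M N) (start (SU M N)) w \<in> finals (SU M N) \<longleftrightarrow>
          (w = [] \<or> Xs Alph M w \<inter> finals M \<noteq> {}) \<or> delta_hat N (start N) w \<in> finals N"
      using inS unfolding dh by (simp add: SU_def)
    also have "\<dots> \<longleftrightarrow> w \<in> kstar (lang Alph M) \<or> delta_hat N (start N) w \<in> finals N"
      using Xs_accept[OF True, of M] by blast
    finally show ?thesis using True unfolding lang_def by auto
  next
    case False
    then show ?thesis using kstar_alph unfolding lang_def by blast
  qed
qed



lemma card_T:
  assumes "complete_dfa Alph M" "m = card (states M)" "k = card (finals M - {start M})"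
  shows "card (Tset M) \<le> 2 ^ (m - 1) + (2 ^ (m - k - 1) - 1)"
proof -
  let ?Q = "states M" and ?s = "start M" and ?F = "finals M"
  have finQ: "finite ?Q" and sQ: "?s \<in> ?Q" and FQ: "?F \<subseteq> ?Q"
    using assms(1) unfolding complete_dfa_def by auto
  define A where "A = insert ?s ` Pow (?Q - {?s})"
  define B where "B = Pow (?Q - ?F - {?s}) - {{}}"
  have injA: "inj_on (insert ?s) (Pow (?Q - {?s}))"
  proof (rule inj_onI)
    fix X Y assume "X \<in> Pow (?Q - {?s})" "Y \<in> Pow (?Q - {?s})" "insert ?s X = insert ?s Y"
    then show "X = Y" by (metis Diff_insert_absorb PowD subset_Diff_insert)
  qed
  have cA: "card A = 2 ^ (m - 1)"
    unfolding A_def using card_image[OF injA] card_Pow[of "?Q - {?s}"] card_Diff_singleton[OF sQ]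
      assms(2) finQ by simp
  have eq: "?Q - ?F - {?s} = (?Q - {?s}) - (?F - {?s})" by blast
  have "card (?Q - ?F - {?s}) = (m - 1) - k"
    unfolding eq using card_Diff_subset[of "?F - {?s}" "?Q - {?s}"] finQ FQ assms(2,3)
      card_Diff_singleton[OF sQ] by (simp add: finite_subset Diff_mono)
  then have cB: "card B = 2 ^ (m - k - 1) - 1"
    unfolding B_def using card_Pow[of "?Q - ?F - {?s}"] finQ
    by (simp add: card_Diff_singleton)
  have sub: "Tset M \<subseteq> A \<union> B"
  proof
    fix P assume P: "P \<in> Tset M"
    show "P \<in> A \<union> B"
    proof (cases "?s \<in> P")
      case True
      then have "P = insert ?s (P - {?s})" by blast
      moreover have "P - {?s} \<in> Pow (?Q - {?s})" using P unfolding Tset_def by auto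
      ultimately show ?thesis unfolding A_def by blast
    next
      case False
      then show ?thesis using P unfolding Tset_def B_def by auto
    qed
  qed
  have fA: "finite A" unfolding A_def using finQ by simp
  have fB: "finite B" unfolding B_def using finQ by simp
  have "card (Tset M) \<le> card (A \<union> B)" using sub fA fB by (simp add: card_mono)
  also have "\<dots> \<le> card A + card B" by (rule card_Un_le)
  finally show ?thesis using cA cB by simp
qed

lemma card_SU:
  assumes "complete_dfa Alph M" "complete_dfa Alph N"
  shows "card (states (SU M N)) \<le> 1 + card (Tset M) * card (states N)"
proof -
  have "card (states (SU M N)) \<le> Suc (card (Some ` Tset M \<times> states N))"
    unfolding SU_def by (simp add: card_insert_le_m1 card_insert_if)
  also have "card (Some ` Tset M \<times> states N) = card (Tset M) * card (states N)"
    by (simp add: card_cartesian_product card_image)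
  finally show ?thesis by simp
qed

theorem theorem1:
  fixes Alph :: "'a set"
    and M :: "('q, 'a) dfa"
    and N :: "('p, 'a) dfa"
    and m n k :: nat
  assumes "complete_dfa Alph M"
    and "complete_dfa Alph N"
    and "m = card (states M)" and "m \<ge> 2"
    and "n = card (states N)" and "n \<ge> 1"
    and "k = card (finals M - {start M})" and "k \<ge> 1"
  shows "\<exists>D :: (nat, 'a) dfa. complete_dfa Alph D \<and>
           card (states D) \<le> (2 ^ (m - 1) + 2 ^ (m - k - 1)) * n - n + 1 \<and>
           lang Alph D = kstar (lang Alph M) \<union> lang Alph N"
proof -
  have c: "complete_dfa Alph (SU M N)" using SU_complete[OF assms(1,2)] .
  obtain D :: "(nat,'a) dfa" where D: "complete_dfa Alph D" "card (states D) = card (states (SU M N))"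
    "lang Alph D = lang Alph (SU M N)" using to_nat[OF c] by blast
  define S :: nat where "S = 2 ^ (m - 1) + 2 ^ (m - k - 1)"
  have S1: "S \<ge> 1" unfolding S_def using one_le_power[of "2::nat" "m - 1"] by linarith
  have "card (Tset M) \<le> S - 1" using card_T[OF assms(1,3,7)] unfolding S_def
    by (simp add: Nat.le_diff_conv2)
  then have "card (Tset M) * n \<le> (S - 1) * n" by simp
  then have "card (states D) \<le> 1 + (S - 1) * n"
    using D(2) card_SU[OF assms(1,2)] unfolding assms(5)[symmetric] by linarith
  also have "1 + (S - 1) * n = S * n - n + 1"
    using S1 by (simp add: diff_mult_distrib)
  finally have "card (states D) \<le> S * n - n + 1" .
  then show ?thesis using D SU_lang[OF assms(1,2)] unfolding S_def by auto
qed

end
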